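(* Let $\mathbb{F}^E_m$ be a floating-point format and $\mathrm{fl}:\mathbb{R}\to\mathbb{F}^E_m\cup\{-\infty,+\infty\}$ its rounding function in round-to-nearest-even mode. For any integer $\ell\in[0,2^{E-1}-2]$, the ratio $|\{\mathrm{fl}(i/2^\ell):i\in\{0,1,\ldots,2^\ell-1\}\}|\,/\,|\mathbb{F}^E_m\cap[0,1]|$ equals $\frac{2^\ell}{2^m(2^{E-1}-1)+1}$ if $\ell\le m+1$, and $\frac{2^m(\ell-m+1)+1}{2^m(2^{E-1}-1)+1}$ if $\ell>m+1$. The same holds for the set $\{\mathrm{fl}(\mathrm{fl}(i)/\mathrm{fl}(2^\ell)):i\in\{0,1,\ldots,2^\ell-1\}\}$.
   Context: $\mathbb{F}^E_m$ ($E\ge1$ exponent bits, $m\ge1$ mantissa bits, bias $b_E=2^{E-1}-1$) is regarded as a set of real numbers: with $e\in\{0,\dots,2^E-2\}$ and $f_1,\ldots,f_m\in\{0,1\}$, the finite values are $\pm(0.f_1\ldots f_m)_2\,2^{1-b_E}$ (for $e=0$, subnormals and zero) and $\pm(1.f_1\ldots f_m)_2\,2^{e-b_E}$ (for $1\le e\le 2^E-2$); $\mathbb{F}^E_m\cap[0,1]$ is the set of such values in $[0,1]$ (zero counted once). Round-to-nearest-even maps a real to the nearest element of $\mathbb{F}^E_m$, breaking ties toward the value with even last mantissa bit. *)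

theory Defs
  imports Complex_Main "HOL-Library.Extended_Real"
begin

text \<open>Floating-point format F^E_m: E exponent bits, m mantissa bits, bias 2^(E-1)-1.\<close>

definition fp_bias :: "nat \<Rightarrow> int" where
  "fp_bias E = 2 ^ (E - 1) - 1"

text \<open>fp_rep E m x f: the real x is a finite value of the format whose mantissa
  bits f_1...f_m encode the natural number f (< 2^m).\<close>
definition fp_rep :: "nat \<Rightarrow> nat \<Rightarrow> real \<Rightarrow> nat \<Rightarrow> bool" where
  "fp_rep E m x f \<longleftrightarrow> f < 2 ^ m \<and> (\<exists>s \<in> {-1, 1::real}.
      x = s * (real f / 2 ^ m) * 2 powi (1 - fp_bias E)
    \<or> (\<exists>e::nat. 1 \<le> e \<and> e \<le> 2 ^ E - 2 \<and>
         x = s * (1 + real f / 2 ^ m) * 2 powi (int e - fp_bias E)))"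

text \<open>The format regarded as a set of reals (zero counted once).\<close>
definition fp_set :: "nat \<Rightarrow> nat \<Rightarrow> real set" where
  "fp_set E m = {x. \<exists>f. fp_rep E m x f}"

definition fp_even :: "nat \<Rightarrow> nat \<Rightarrow> real \<Rightarrow> bool" where
  "fp_even E m x \<longleftrightarrow> (\<exists>f. even f \<and> fp_rep E m x f)"

definition rne_of :: "nat \<Rightarrow> nat \<Rightarrow> real \<Rightarrow> real \<Rightarrow> bool" where
  "rne_of E m x y \<longleftrightarrow> y \<in> fp_set E m \<and> (\<forall>z \<in> fp_set E m. \<bar>x - y\<bar> \<le> \<bar>x - z\<bar>) \<and>
     ((\<exists>z \<in> fp_set E m. z \<noteq> y \<and> \<bar>x - z\<bar> = \<bar>x - y\<bar>) \<longrightarrow> fp_even E m y)"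

text \<open>Rounding function fl : R -> F \<union> {-\<infinity>, +\<infinity>} in round-to-nearest-even mode,
  with the IEEE 754 overflow rule: |x| \<ge> 2^emax (2 - 2^(-m-1)) rounds to \<plusminus>\<infinity>,
  where emax = 2^E - 2 - bias.\<close>
definition fl :: "nat \<Rightarrow> nat \<Rightarrow> real \<Rightarrow> ereal" where
  "fl E m x = (if \<bar>x\<bar> \<ge> (2 - 2 powi (- (int m + 1))) * 2 powi (int (2 ^ E - 2) - fp_bias E)
      then (if x > 0 then \<infinity> else - \<infinity>)
      else ereal (THE y. rne_of E m x y))"

definition fl_ext :: "nat \<Rightarrow> nat \<Rightarrow> ereal \<Rightarrow> ereal" where
  "fl_ext E m x = (case x of ereal r \<Rightarrow> fl E m r | PInfty \<Rightarrow> \<infinity> | MInfty \<Rightarrow> - \<infinity>)"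

end

theory Submission
  imports Defs
begin

definition PP :: "nat \<Rightarrow> nat set" where
  "PP m = {p. \<exists>q t. p = q * 2^t \<and> q < 2^(m+1)}"

lemma PP_small: "p < 2^(m+1) \<Longrightarrow> p \<in> PP m"
  unfolding PP_def by (rule CollectI, rule exI[of _ p], rule exI[of _ 0]) simp

lemma PP_intro: "q < 2^(m+1) \<Longrightarrow> q * 2^t \<in> PP m"
  unfolding PP_def by blast

lemma pow_split: "m \<le> n \<Longrightarrow> (2::nat)^n = 2^m * 2^(n-m)"
  by (simp add: power_add[symmetric])

lemma binade_PP:
  assumes "n \<ge> m" "p \<in> PP m" "2^n \<le> p" "p < 2^(n+1)"
  shows "\<exists>q. p = q * 2^(n-m) \<and> 2^m \<le> q \<and> q < 2^(m+1)"
proof -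
  obtain q t where p: "p = q * 2^t" "q < 2^(m+1)" using assms(2) unfolding PP_def by blast
  have "t \<ge> n - m"
  proof (rule ccontr)
    assume "\<not> ?thesis"
    then have "t + 1 \<le> n - m" by simp
    then have "(2::nat)^(t+1) \<le> 2^(n-m)" by (rule power_increasing) simp
    then have "q * 2^t < 2^(m+1) * 2^t" using p(2) by simp
    also have "\<dots> = 2^m * 2^(t+1)" by (simp add: power_add)
    also have "\<dots> \<le> 2^m * 2^(n-m)" using \<open>(2::nat)^(t+1) \<le> 2^(n-m)\<close> by simp
    also have "\<dots> = 2^n" using assms(1) by (simp add: power_add[symmetric])
    finally show False using assms(3) p(1) by simp
  qed
  define q' where "q' = q * 2^(t - (n-m))"
  have pq: "p = q' * 2^(n-m)" unfolding q'_def p(1) using \<open>t \<ge> n - m\<close>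
    by (simp add: mult.assoc power_add[symmetric])
  have "2^m * 2^(n-m) \<le> q' * 2^(n-m)" using assms(3) pq pow_split[OF assms(1)] by simp
  then have "2^m \<le> q'" by simp
  moreover have "q' * 2^(n-m) < 2^(m+1) * 2^(n-m)" using assms(1,4) pq pow_split[of "m+1" "n+1"]
    by simp
  then have "q' < 2^(m+1)" by simp
  ultimately show ?thesis using pq by blast
qed

lemma binade_set:
  assumes "n \<ge> m"
  shows "PP m \<inter> {2^n..<(2::nat)^(n+1)} = (\<lambda>q. q * 2^(n-m)) ` {2^m..<2^(m+1)}"
proof
  show "PP m \<inter> {2^n..<(2::nat)^(n+1)} \<subseteq> (\<lambda>q. q * 2^(n-m)) ` {2^m..<2^(m+1)}"
    using binade_PP[OF assms] by fastforce
next
  show "(\<lambda>q. q * 2^(n-m)) ` {2^m..<2^(m+1)} \<subseteq> PP m \<inter> {2^n..<(2::nat)^(n+1)}"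
  proof
    fix p :: nat assume "p \<in> (\<lambda>q. q * 2^(n-m)) ` {2^m..<2^(m+1)}"
    then obtain q where q: "p = q * 2^(n-m)" "2^m \<le> q" "q < 2^(m+1)" by auto
    have "(2::nat)^n = 2^m * 2^(n-m)" using assms by (simp add: power_add[symmetric])
    moreover have "(2::nat)^(n+1) = 2^(m+1) * 2^(n-m)" using assms by (simp add: power_add[symmetric])
    ultimately show "p \<in> PP m \<inter> {2^n..<(2::nat)^(n+1)}" using q PP_intro[OF q(3)] by auto
  qed
qed

definition CC :: "nat \<Rightarrow> nat \<Rightarrow> nat" where
  "CC m n = (if n \<le> m + 1 then 2^n else 2^(m+1) + (n - m - 1) * 2^m)"

lemma card_PP: "card (PP m \<inter> {..<2^n}) = CC m n"
proof (induction n)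
  case 0
  have "PP m \<inter> {..<2^0} = {0}" using PP_small[of 0 m] by auto
  then show ?case by (simp add: CC_def)
next
  case (Suc n)
  show ?case
  proof (cases "Suc n \<le> m + 1")
    case True
    have "PP m \<inter> {..<2^Suc n} = {..<2^Suc n}"
    proof -
      have "(2::nat)^Suc n \<le> 2^(m+1)" using True by (rule power_increasing) simp
      then have "\<And>p. p < 2^Suc n \<Longrightarrow> p \<in> PP m" using PP_small[of _ m] by (meson order.strict_trans2)
      then show ?thesis by auto
    qed
    then show ?thesis using True by (simp add: CC_def)
  next
    case False
    have split: "PP m \<inter> {..<2^Suc n} = (PP m \<inter> {..<2^n}) \<union> (PP m \<inter> {2^n..<(2::nat)^(n+1)})" by auto
    have inj: "inj_on (\<lambda>q. q * 2^(n-m)) {2^m..<(2::nat)^(m+1)}" by (rule inj_onI) simp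
    have c2: "card (PP m \<inter> {2^n..<(2::nat)^(n+1)}) = 2^m"
      using False binade_set[of m n] card_image[OF inj] by simp
    have "card (PP m \<inter> {..<2^Suc n}) = CC m n + 2^m"
      unfolding split using Suc.IH c2 by (subst card_Un_disjoint) auto
    moreover have "CC m n + 2^m = CC m (Suc n)"
    proof (cases "n = m + 1")
      case True then show ?thesis by (simp add: CC_def)
    next
      case False2: False
      then have "n - m - 1 + 1 = Suc n - m - 1" using False by simp
      then have "(n - m - 1) * 2^m + 2^m = (Suc n - m - 1) * 2^m"
        by (metis add.commute mult_Suc nat_mult_1 plus_1_eq_Suc)
      then show ?thesis using False False2 by (simp add: CC_def)
    qed
    ultimately show ?thesis by simp
  qed
qed

definition QQ :: "nat \<Rightarrow> nat \<Rightarrow> nat set" where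
  "QQ E m = {N. N < 2^m} \<union> {N. \<exists>f e. f < 2^m \<and> 1 \<le> e \<and> e \<le> 2^E - 2 \<and> N = (2^m+f)*2^(e-1)}"

definition uu :: "nat \<Rightarrow> nat \<Rightarrow> real" where
  "uu E m = 2 powi (1 - fp_bias E - int m)"

lemma uu_pos: "uu E m > 0" unfolding uu_def by simp

lemma powi_sub: "(2::real) powi (1 - fp_bias E) = uu E m * 2^m"
proof -
  have "(2::real) powi (1 - fp_bias E) = 2 powi ((1 - fp_bias E - int m) + int m)" by simp
  also have "\<dots> = uu E m * 2^m" unfolding uu_def by (subst power_int_add) simp_all
  finally show ?thesis .
qed

lemma powi_norm: "1 \<le> e \<Longrightarrow> (2::real) powi (int e - fp_bias E) = uu E m * 2^m * 2^(e-1)"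
proof -
  assume "1 \<le> e"
  then have eq: "int e - fp_bias E = (1 - fp_bias E) + int (e - 1)" by linarith
  have "(2::real) powi (int e - fp_bias E) = 2 powi (1 - fp_bias E) * 2 powi int (e-1)"
    unfolding eq by (rule power_int_add) simp
  then show ?thesis using powi_sub[of E m] by simp
qed

lemma fp_rep_iff:
  "fp_rep E m x f \<longleftrightarrow> f < 2^m \<and> (\<exists>s\<in>{-1,1::real}. x = s * uu E m * real f
     \<or> (\<exists>e::nat. 1 \<le> e \<and> e \<le> 2^E - 2 \<and> x = s * uu E m * real ((2^m+f)*2^(e-1))))"
proof -
  have a: "s * (real f / 2 ^ m) * 2 powi (1 - fp_bias E) = s * uu E m * real f" for s :: real
    using powi_sub[of E m] by simp
  have b: "1 \<le> e \<Longrightarrow> s * (1 + real f / 2 ^ m) * 2 powi (int e - fp_bias E)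
      = s * uu E m * real ((2^m+f)*2^(e-1))" for s :: real and e
    using powi_norm[of e E m] by (simp add: field_simps)
  have c: "(\<exists>e::nat. 1 \<le> e \<and> e \<le> 2 ^ E - 2 \<and> x = s * (1 + real f / 2 ^ m) * 2 powi (int e - fp_bias E))
     = (\<exists>e::nat. 1 \<le> e \<and> e \<le> 2^E - 2 \<and> x = s * uu E m * real ((2^m+f)*2^(e-1)))" for s :: real
  proof
    assume "\<exists>e::nat. 1 \<le> e \<and> e \<le> 2 ^ E - 2 \<and> x = s * (1 + real f / 2 ^ m) * 2 powi (int e - fp_bias E)"
    then obtain e where "1 \<le> e" "e \<le> 2 ^ E - 2" "x = s * (1 + real f / 2 ^ m) * 2 powi (int e - fp_bias E)" by blast
    then show "\<exists>e::nat. 1 \<le> e \<and> e \<le> 2^E - 2 \<and> x = s * uu E m * real ((2^m+f)*2^(e-1))" using b by metis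
  next
    assume "\<exists>e::nat. 1 \<le> e \<and> e \<le> 2^E - 2 \<and> x = s * uu E m * real ((2^m+f)*2^(e-1))"
    then obtain e where "1 \<le> e" "e \<le> 2 ^ E - 2" "x = s * uu E m * real ((2^m+f)*2^(e-1))" by blast
    then show "\<exists>e::nat. 1 \<le> e \<and> e \<le> 2 ^ E - 2 \<and> x = s * (1 + real f / 2 ^ m) * 2 powi (int e - fp_bias E)" using b by metis
  qed
  show ?thesis unfolding fp_rep_def a c by (rule refl)
qed

lemma fp_set_iff:
  "x \<in> fp_set E m \<longleftrightarrow> (\<exists>N\<in>QQ E m. x = uu E m * real N \<or> x = - (uu E m * real N))"
proof
  assume "x \<in> fp_set E m"
  then obtain f where "fp_rep E m x f" unfolding fp_set_def by blast
  then obtain s where s: "s \<in> {-1,1::real}" "f < 2^m" and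
    d: "x = s * uu E m * real f \<or>
       (\<exists>e::nat. 1 \<le> e \<and> e \<le> 2^E - 2 \<and> x = s * uu E m * real ((2^m+f)*2^(e-1)))"
    unfolding fp_rep_iff by blast
  from d show "\<exists>N\<in>QQ E m. x = uu E m * real N \<or> x = - (uu E m * real N)"
  proof
    assume "x = s * uu E m * real f"
    moreover have "f \<in> QQ E m" using s(2) unfolding QQ_def by simp
    ultimately show ?thesis using s(1) by auto
  next
    assume "\<exists>e::nat. 1 \<le> e \<and> e \<le> 2^E - 2 \<and> x = s * uu E m * real ((2^m+f)*2^(e-1))"
    then obtain e where e: "1 \<le> e" "e \<le> 2^E - 2" "x = s * uu E m * real ((2^m+f)*2^(e-1))" by blast
    have "(2^m+f)*2^(e-1) \<in> QQ E m" using s(2) e unfolding QQ_def by blast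
    then show ?thesis using s(1) e(3) by (intro bexI[of _ "(2^m+f)*2^(e-1)"]) auto
  qed
next
  assume "\<exists>N\<in>QQ E m. x = uu E m * real N \<or> x = - (uu E m * real N)"
  then obtain N where N: "N \<in> QQ E m" "x = uu E m * real N \<or> x = - (uu E m * real N)" by blast
  show "x \<in> fp_set E m"
  proof (cases "N < 2^m")
    case True
    then have "fp_rep E m x N" unfolding fp_rep_iff using N(2) by force
    then show ?thesis unfolding fp_set_def by blast
  next
    case False
    then obtain f e where fe: "f < 2^m" "1 \<le> e" "e \<le> 2^E - 2" "N = (2^m+f)*2^(e-1)"
      using N(1) unfolding QQ_def by auto
    then have "fp_rep E m x f" unfolding fp_rep_iff using N(2) by force
    then show ?thesis unfolding fp_set_def by blast
  qed
qed

lemma QQ_PP: "QQ E m \<subseteq> PP m"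
proof
  fix N assume "N \<in> QQ E m"
  then consider "N < 2^m" | f e where "f < 2^m" "N = (2^m+f)*2^(e-1)" unfolding QQ_def by auto
  then show "N \<in> PP m"
  proof cases
    case 1 then show ?thesis by (intro PP_small) simp
  next
    case 2 then show ?thesis using PP_intro[of "2^m+f" m "e-1"] by simp
  qed
qed

lemma log_ex: "(i::nat) \<ge> 1 \<Longrightarrow> \<exists>n. 2^n \<le> i \<and> i < 2^(n+1)"
  using ex_power_ivl1[of 2 i] by simp

lemma PP_QQ:
  assumes "E \<ge> 2" "K \<le> 2^E - 3" "p \<in> PP m" "p \<le> 2^(K+m)"
  shows "p \<in> QQ E m"
proof (cases "p < 2^m")
  case True then show ?thesis unfolding QQ_def by simp
next
  case False
  then obtain n where n: "2^n \<le> p" "p < 2^(n+1)" 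
  proof -
    have "(1::nat) \<le> 2^m" by simp
    then have "1 \<le> p" using False by linarith
    then show ?thesis using log_ex[of p] that by blast
  qed
  have "(2::nat)^m < 2^(n+1)" using False n(2) by linarith
  then have "m < n+1" using power_less_imp_less_exp[of "2::nat" m "n+1"] by simp
  then have "m \<le> n" by simp
  from binade_PP[OF this assms(3) n] obtain q where q: "p = q * 2^(n-m)" "2^m \<le> q" "q < 2^(m+1)" by blast
  have "(2::nat)^n \<le> 2^(K+m)" using n(1) assms(4) by (rule order.trans)
  then have "n \<le> K + m" by simp
  have "4 \<le> (2::nat)^E" using assms(1) power_increasing[of 2 E "2::nat"] by simp
  have "p = (2^m + (q - 2^m)) * 2^(n-m+1-1)" using q by simp
  moreover have "q - 2^m < 2^m" using q by simp
  moreover have "n - m + 1 \<le> 2^E - 2" using \<open>n \<le> K + m\<close> assms(2) \<open>4 \<le> 2^E\<close> by linarith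
  moreover have "1 \<le> n - m + 1" by simp
  ultimately show ?thesis unfolding QQ_def by blast
qed

lemma norm_unique:
  fixes a a' t t' :: nat
  assumes "2^m \<le> a" "a < 2^(m+1)" "2^m \<le> a'" "a' < 2^(m+1)" "a * 2^t = a' * 2^t'"
  shows "a = a'"
proof -
  have *: "a = b" if "2^m \<le> a" "a < 2^(m+1)" "2^m \<le> b" "b < 2^(m+1)" "a * 2^t = b * 2^t'" "t \<le> t'"
    for a b t t' :: nat
  proof -
    have "a * 2^t = (b * 2^(t'-t)) * 2^t" using that(5,6) by (simp add: mult.assoc power_add[symmetric])
    then have ab: "a = b * 2^(t'-t)" by simp
    show ?thesis
    proof (cases "t' = t")
      case True then show ?thesis using ab by simp
    next
      case False
      then have "(2::nat)^1 \<le> 2^(t'-t)" using that(6) by (intro power_increasing) auto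
      then have "b * 2 \<le> a" using ab by (metis mult_le_mono2 power_one_right)
      then show ?thesis using that(2,3) by simp
    qed
  qed
  show ?thesis
  proof (cases "t \<le> t'")
    case True then show ?thesis using *[OF assms] by simp
  next
    case False then show ?thesis using *[OF assms(3,4,1,2) assms(5)[symmetric]] by simp
  qed
qed

lemma even_char:
  assumes "m \<ge> 1" "2^m \<le> q" "q < 2^(m+1)" "t + 1 \<le> 2^E - 2"
  shows "fp_even E m (uu E m * real (q * 2^t)) \<longleftrightarrow> even q"
proof
  assume "even q"
  have "even (q - 2^m)" using \<open>even q\<close> assms(1,2) by simp
  moreover have "fp_rep E m (uu E m * real (q * 2^t)) (q - 2^m)"
    unfolding fp_rep_iff using assms
    by (intro conjI bexI[of _ 1] disjI2 exI[of _ "t+1"]) auto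
  ultimately show "fp_even E m (uu E m * real (q * 2^t))" unfolding fp_even_def by blast
next
  assume "fp_even E m (uu E m * real (q * 2^t))"
  then obtain f where f: "even f" "fp_rep E m (uu E m * real (q * 2^t)) f" unfolding fp_even_def by blast
  have u: "uu E m > 0" by (rule uu_pos)
  have "q \<le> q * 2^t" by simp
  then have "2^m \<le> q*2^t" using assms(2) by linarith
  then have qpos: "real (q*2^t) \<ge> 2^m" by (metis of_nat_le_iff of_nat_numeral of_nat_power)
  from f(2) obtain s where s: "s \<in> {-1,1::real}" "f < 2^m" and
    d: "uu E m * real (q * 2^t) = s * uu E m * real f \<or>
       (\<exists>e::nat. 1 \<le> e \<and> e \<le> 2^E - 2 \<and> uu E m * real (q * 2^t) = s * uu E m * real ((2^m+f)*2^(e-1)))"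
    unfolding fp_rep_iff by blast
  show "even q"
  proof (cases "uu E m * real (q * 2^t) = s * uu E m * real f")
    case True
    then have eqs: "real (q*2^t) = s * real f" using u by (simp add: mult.assoc)
    have fm: "real f < 2^m" using s(2) by (metis of_nat_less_iff of_nat_numeral of_nat_power)
    have "s \<noteq> -1"
    proof
      assume "s = -1"
      with eqs have "real (q*2^t) \<le> 0" by simp
      moreover have "(0::real) < 2^m" by simp
      ultimately show False using qpos by linarith
    qed
    moreover have "s \<noteq> 1"
    proof
      assume "s = 1"
      with eqs have "real (q*2^t) = real f" by simp
      then show False using qpos fm by linarith
    qed
    ultimately have "s \<noteq> -1 \<and> s \<noteq> 1" by blast
    then show ?thesis using s(1) by simp
  next
    case False
    then obtain e where e: "1 \<le> e" "uu E m * real (q * 2^t) = s * uu E m * real ((2^m+f)*2^(e-1))"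
      using d by blast
    then have "real (q*2^t) = s * real ((2^m+f)*2^(e-1))" using u by (simp add: mult.assoc)
    moreover have "s \<noteq> -1"
    proof
      assume "s = -1"
      with \<open>real (q*2^t) = s * real ((2^m+f)*2^(e-1))\<close> have "real (q*2^t) \<le> 0" by simp
      moreover have "(0::real) < 2^m" by simp
      ultimately show False using qpos by linarith
    qed
    ultimately have "real (q*2^t) = real ((2^m+f)*2^(e-1))" using s(1) by auto
    then have "q*2^t = (2^m+f)*2^(e-1)" by (simp only: of_nat_eq_iff)
    then have "q = 2^m + f" using norm_unique[of m q "2^m+f" t "e-1"] assms s(2) by simp
    then show ?thesis using f(1) assms(1) by simp
  qed
qed

lemma the_rne:
  assumes "y \<in> fp_set E m" "\<forall>z\<in>fp_set E m. \<bar>x - y\<bar> \<le> \<bar>x - z\<bar>"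
    "\<forall>z\<in>fp_set E m. z \<noteq> y \<and> \<bar>x - z\<bar> = \<bar>x - y\<bar> \<longrightarrow> fp_even E m y \<and> \<not> fp_even E m z"
  shows "(THE y. rne_of E m x y) = y"
proof (rule the_equality)
  show "rne_of E m x y" unfolding rne_of_def using assms by blast
next
  fix y' assume r: "rne_of E m x y'"
  show "y' = y"
  proof (rule ccontr)
    assume ne: "y' \<noteq> y"
    from r have y': "y' \<in> fp_set E m" "\<forall>z\<in>fp_set E m. \<bar>x - y'\<bar> \<le> \<bar>x - z\<bar>"
      "(\<exists>z\<in>fp_set E m. z \<noteq> y' \<and> \<bar>x - z\<bar> = \<bar>x - y'\<bar>) \<longrightarrow> fp_even E m y'"
      unfolding rne_of_def by blast+
    have eq: "\<bar>x - y'\<bar> = \<bar>x - y\<bar>" using y'(1,2) assms(1,2) by force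
    then have "\<not> fp_even E m y'" using assms(3) y'(1) ne by blast
    moreover have "fp_even E m y'" using y'(3) assms(1) ne eq by force
    ultimately show False by blast
  qed
qed

lemma rne_two:
  assumes "a \<in> fp_set E m" "b \<in> fp_set E m" "a < x" "x < b"
    "\<forall>z\<in>fp_set E m. z \<le> a \<or> b \<le> z" "fp_even E m a \<longleftrightarrow> \<not> fp_even E m b"
  shows "(THE y. rne_of E m x y) = (if x - a < b - x \<or> (x - a = b - x \<and> fp_even E m a) then a else b)"
proof -
  define c where "c = (x - a < b - x \<or> (x - a = b - x \<and> fp_even E m a))"
  define y where "y = (if c then a else b)"
  have dy: "\<bar>x - y\<bar> \<le> x - a \<and> \<bar>x - y\<bar> \<le> b - x"
  proof (cases c)
    case True
    then have "y = a" "x - a \<le> b - x" unfolding y_def c_def by auto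
    then show ?thesis using assms(3) by simp
  next
    case False
    then have "y = b" "b - x \<le> x - a" unfolding y_def c_def by auto
    then show ?thesis using assms(4) by simp
  qed
  have near: "\<bar>x - y\<bar> < \<bar>x - z\<bar>" if "z \<in> fp_set E m" "z \<noteq> a" "z \<noteq> b" for z
  proof -
    have "z < a \<or> b < z" using assms(5) that by force
    then show ?thesis
    proof
      assume "z < a"
      then have "\<bar>x - z\<bar> = x - z" using assms(3) by simp
      then show ?thesis using dy \<open>z < a\<close> by linarith
    next
      assume "b < z"
      then have "\<bar>x - z\<bar> = z - x" using assms(4) by simp
      then show ?thesis using dy \<open>b < z\<close> by linarith
    qed
  qed
  have da: "\<bar>x - a\<bar> = x - a" and db: "\<bar>x - b\<bar> = b - x" using assms(3,4) by auto
  have "(THE y. rne_of E m x y) = y"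
  proof (rule the_rne)
    show "y \<in> fp_set E m" using assms(1,2) unfolding y_def by simp
    show "\<forall>z\<in>fp_set E m. \<bar>x - y\<bar> \<le> \<bar>x - z\<bar>"
    proof
      fix z assume z: "z \<in> fp_set E m"
      show "\<bar>x - y\<bar> \<le> \<bar>x - z\<bar>"
      proof (cases "z = a \<or> z = b")
        case True then show ?thesis using dy da db by auto
      next
        case False then show ?thesis using near[OF z] by force
      qed
    qed
    show "\<forall>z\<in>fp_set E m. z \<noteq> y \<and> \<bar>x - z\<bar> = \<bar>x - y\<bar> \<longrightarrow> fp_even E m y \<and> \<not> fp_even E m z"
    proof (intro ballI impI)
      fix z assume z: "z \<in> fp_set E m" "z \<noteq> y \<and> \<bar>x - z\<bar> = \<bar>x - y\<bar>"
      have zab: "z = a \<or> z = b" using near[OF z(1)] z(2) by force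
      show "fp_even E m y \<and> \<not> fp_even E m z"
      proof (cases c)
        case True
        then have ya: "y = a" unfolding y_def by simp
        then have zb: "z = b" using zab z(2) by auto
        then have "x - a = b - x" using z(2) ya da db by simp
        then have "fp_even E m a" using True unfolding c_def by simp
        then show ?thesis using ya zb assms(6) by simp
      next
        case False
        then have yb: "y = b" unfolding y_def by simp
        then have za: "z = a" using zab z(2) by auto
        then have "x - a = b - x" using z(2) yb da db by simp
        then have "\<not> fp_even E m a" using False unfolding c_def by simp
        then show ?thesis using yb za assms(6) by simp
      qed
    qed
  qed
  then show ?thesis unfolding y_def c_def .
qed

definition bb :: "nat \<Rightarrow> nat" where "bb E = 2^(E-1) - 1"

lemma bias_bb: "E \<ge> 1 \<Longrightarrow> fp_bias E = int (bb E)"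
  unfolding fp_bias_def bb_def by (simp add: of_nat_diff)

lemma bb_ge: "E \<ge> 2 \<Longrightarrow> bb E \<ge> 1"
proof -
  assume "E \<ge> 2"
  then have "(2::nat)^1 \<le> 2^(E-1)" by (intro power_increasing) auto
  then show ?thesis unfolding bb_def by simp
qed

lemma two_pow_E: "E \<ge> 1 \<Longrightarrow> (2::nat)^E - 2 = 2 * bb E"
proof -
  assume "E \<ge> 1"
  then have "(2::nat)^E = 2 * 2^(E-1)" by (metis Suc_diff_le diff_Suc_1 power_Suc)
  moreover have "(1::nat) \<le> 2^(E-1)" by simp
  ultimately show ?thesis unfolding bb_def by simp
qed

lemma uu_eq: "E \<ge> 2 \<Longrightarrow> uu E m * 2^(m + bb E - 1) = 1"
proof -
  assume E: "E \<ge> 2"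
  have "uu E m * 2^(m + bb E - 1) = 2 powi (1 - int (bb E) - int m) * 2 powi int (m + bb E - 1)"
    unfolding uu_def using bias_bb[of E] E by simp
  also have "\<dots> = 2 powi ((1 - int (bb E) - int m) + int (m + bb E - 1))"
    by (rule power_int_add[symmetric]) simp
  also have "(1 - int (bb E) - int m) + int (m + bb E - 1) = 0" using bb_ge[OF E] by simp
  finally show ?thesis by simp
qed

lemma fl_else:
  assumes E: "E \<ge> 2" and x: "0 \<le> x" "x \<le> 2^bb E"
  shows "fl E m x = ereal (THE y. rne_of E m x y)"
proof -
  have e1: "int (2^E - 2) = 2 * int (bb E)" using two_pow_E[of E] E by simp
  have e2: "fp_bias E = int (bb E)" using bias_bb[of E] E by simp
  have "int (2^E - 2) - fp_bias E = int (bb E)" using e1 e2 by linarith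
  then have p1: "(2::real) powi (int (2^E - 2) - fp_bias E) = 2^bb E" by simp
  have "- (int m + 1) = - int (m+1)" by simp
  then have "(2::real) powi (- (int m + 1)) = inverse (2 powi int (m+1))"
    by (simp only: power_int_minus)
  also have "\<dots> = inverse (2^(m+1))" by (simp only: power_int_of_nat)
  also have "\<dots> \<le> inverse 2"
  proof (rule le_imp_inverse_le)
    have "(2::real)^1 \<le> 2^(m+1)" by (rule power_increasing) simp_all
    then show "(2::real) \<le> 2^(m+1)" by simp
  qed simp
  finally have le1: "(2::real) powi (- (int m + 1)) \<le> 1/2" by simp
  have pos: "(0::real) < 2^bb E" by simp
  have "1 * (2::real)^bb E < (2 - 2 powi (- (int m + 1))) * 2^bb E"
    by (rule mult_strict_right_mono) (use le1 pos in simp_all)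
  then have T: "(2::real)^bb E < (2 - 2 powi (- (int m + 1))) * 2 powi (int (2^E - 2) - fp_bias E)"
    unfolding p1 by simp
  have "\<bar>x\<bar> = x" using x by simp
  then have "\<not> \<bar>x\<bar> \<ge> (2 - 2 powi (- (int m + 1))) * 2 powi (int (2^E - 2) - fp_bias E)"
    using x T by linarith
  then show ?thesis unfolding fl_def by simp
qed

lemma uu_le:
  assumes E: "E \<ge> 2" and K: "K \<le> 2^E - 3" and X: "X \<le> 2^(K+m)"
  shows "uu E m * real X \<le> 2^bb E"
proof -
  define P where "P = m + bb E - 1"
  have uP: "uu E m * 2^P = 1" unfolding P_def by (rule uu_eq[OF E])
  have "K + m \<le> bb E + P" using K two_pow_E[of E] E bb_ge[OF E] unfolding P_def by simp
  then have "(2::nat)^(K+m) \<le> 2^(bb E + P)" by (intro power_increasing) auto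
  also have "\<dots> = 2^bb E * 2^P" by (rule power_add)
  finally have "X \<le> 2^bb E * 2^P" using X by (rule order.trans[rotated])
  then have "real X \<le> real (2^bb E * 2^P)" by (simp only: of_nat_le_iff)
  also have "\<dots> = 2^bb E * 2^P" by simp
  finally have "uu E m * real X \<le> uu E m * (2^bb E * 2^P)"
    using uu_pos[of E m] by (intro mult_left_mono) auto
  also have "\<dots> = 2^bb E * (uu E m * 2^P)" by (simp only: mult_ac)
  also have "\<dots> = 2^bb E" using uP by simp
  finally show ?thesis .
qed

lemma inF: "E \<ge> 2 \<Longrightarrow> K \<le> 2^E - 3 \<Longrightarrow> N \<in> PP m \<Longrightarrow> N \<le> 2^(K+m) \<Longrightarrow> uu E m * real N \<in> fp_set E m"
  using PP_QQ[of E K N m] fp_set_iff by blast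

lemma fl_exact:
  assumes E: "E \<ge> 2" and K: "K \<le> 2^E - 3" and X: "X \<in> PP m" "X \<le> 2^(K+m)"
  shows "fl E m (uu E m * real X) = ereal (uu E m * real X)"
proof -
  have "fl E m (uu E m * real X) = ereal (THE y. rne_of E m (uu E m * real X) y)"
    by (rule fl_else[OF E]) (use uu_pos[of E m] uu_le[OF E K X(2)] in auto)
  also have "(THE y. rne_of E m (uu E m * real X) y) = uu E m * real X"
    by (rule the_rne) (use inF[OF E K X] in auto)
  finally show ?thesis .
qed

lemma fl_round:
  assumes E: "E \<ge> 2" and m: "m \<ge> 1" and K: "K \<le> 2^E - 3" and n: "n \<ge> m+1"
    and q: "2^m \<le> q" "q < 2^(m+1)" and X: "q*2^(n-m) < X" "X < (q+1)*2^(n-m)"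
    and hiK: "(q+1)*2^(n-m) \<le> 2^(K+m)"
  shows "fl E m (uu E m * real X) = ereal (uu E m * real (if 2*(X - q*2^(n-m)) < 2^(n-m)
     \<or> (2*(X - q*2^(n-m)) = 2^(n-m) \<and> even q) then q*2^(n-m) else (q+1)*2^(n-m)))"
proof -
  define s where "s = (2::nat)^(n-m)"
  define lo where "lo = q*s"
  define hi where "hi = (q+1)*s"
  let ?u = "uu E m"
  have u: "?u > 0" by (rule uu_pos)
  have E4: "4 \<le> (2::nat)^E" using E power_increasing[of 2 E "2::nat"] by simp
  have hs: "hi = lo + s" unfolding hi_def lo_def by simp
  have Xlh: "lo < X" "X < hi" using X unfolding lo_def hi_def s_def by auto
  have loPP: "lo \<in> PP m" unfolding lo_def s_def using q by (intro PP_intro)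
  have hiPP: "hi \<in> PP m"
  proof (cases "q+1 < 2^(m+1)")
    case True then show ?thesis unfolding hi_def s_def by (intro PP_intro)
  next
    case False then have "q+1 = 2^(m+1)" using q by simp
    then have "hi = 2^m * 2^(n-m+1)" unfolding hi_def s_def by (simp add: power_add)
    have "(2::nat)^m < 2^(m+1)" by simp
    then have "(2::nat)^m * 2^(n-m+1) \<in> PP m" by (rule PP_intro)
    then show ?thesis using \<open>hi = 2^m * 2^(n-m+1)\<close> by simp
  qed
  have hiK': "hi \<le> 2^(K+m)" using hiK unfolding hi_def s_def .
  have loK: "lo \<le> 2^(K+m)" using hiK' hs by simp
  have "(2::nat)^(m + (n-m)) = 2^m * s" unfolding s_def by (simp add: power_add)
  also have "\<dots> \<le> lo" unfolding lo_def using q by simp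
  also have "\<dots> \<le> 2^(K+m)" by (rule loK)
  finally have "m + (n-m) \<le> K + m" by simp
  then have tK: "n - m \<le> K" by simp
  have loF: "?u * real lo \<in> fp_set E m" by (rule inF[OF E K loPP loK])
  have hiF: "?u * real hi \<in> fp_set E m" by (rule inF[OF E K hiPP hiK'])
  have ev_lo: "fp_even E m (?u * real lo) \<longleftrightarrow> even q" unfolding lo_def s_def
    by (rule even_char) (use m q tK K E4 in auto)
  have ev_hi: "fp_even E m (?u * real hi) \<longleftrightarrow> \<not> even q"
  proof (cases "q+1 < 2^(m+1)")
    case True
    have "fp_even E m (?u * real hi) \<longleftrightarrow> even (q+1)" unfolding hi_def s_def
      by (rule even_char) (use m q tK K E4 True in auto)
    then show ?thesis by simp
  next
    case False then have q1: "q+1 = 2^(m+1)" using q by simp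
    then have hi2: "hi = 2^m * 2^(n-m+1)" unfolding hi_def s_def by (simp add: power_add)
    have "(2::nat)^(m + (n-m+1)) = hi" unfolding hi2 by (simp add: power_add)
    then have "(2::nat)^(m + (n-m+1)) \<le> 2^(K+m)" using hiK' by simp
    then have "m + (n-m+1) \<le> K + m" by (rule power_le_imp_le_exp[rotated]) simp
    then have "fp_even E m (?u * real hi) \<longleftrightarrow> even ((2::nat)^m)" unfolding hi2
      by (intro even_char) (use m K E4 in auto)
    moreover have "even (q+1)" using q1 by simp
    ultimately show ?thesis using m by simp
  qed
  have gapN: "N \<le> lo \<or> hi \<le> N" if NP0: "N \<in> PP m" for N
  proof (rule ccontr)
    assume "\<not> (N \<le> lo \<or> hi \<le> N)"
    then have N: "lo < N" "N < hi" by auto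
    have "(2::nat)^n = 2^m * s" unfolding s_def using n by (simp add: power_add[symmetric])
    also have "\<dots> \<le> lo" unfolding lo_def using q by simp
    finally have "2^n \<le> N" using N by simp
    have "q+1 \<le> 2^(m+1)" using q by simp
    then have "hi \<le> 2^(m+1) * s" unfolding hi_def by (rule mult_right_mono) simp
    also have "\<dots> = 2^(n+1)" unfolding s_def using n by (simp add: power_add[symmetric])
    finally have "N < 2^(n+1)" using N by simp
    obtain q' where q': "N = q' * 2^(n-m)" using binade_PP[of m n N] n NP0 \<open>2^n \<le> N\<close> \<open>N < 2^(n+1)\<close> by auto
    have "q * s < q' * s" "q' * s < (q+1) * s" using N q' unfolding lo_def hi_def s_def by auto
    then have "q < q'" "q' < q+1" by (simp_all only: mult_less_cancel2)
    then show False by simp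
  qed
  have gap: "\<forall>z\<in>fp_set E m. z \<le> ?u * real lo \<or> ?u * real hi \<le> z"
  proof
    fix z assume "z \<in> fp_set E m"
    then obtain N where N: "N \<in> QQ E m" "z = ?u * real N \<or> z = - (?u * real N)"
      unfolding fp_set_iff by blast
    have NP: "N \<in> PP m" using N(1) QQ_PP by blast
    show "z \<le> ?u * real lo \<or> ?u * real hi \<le> z"
    proof (cases "z = ?u * real N")
      case True
      from gapN[OF NP] have "real N \<le> real lo \<or> real hi \<le> real N" by simp
      then show ?thesis using True u by (auto intro: mult_left_mono)
    next
      case False
      then have "z = - (?u * real N)" using N(2) by blast
      then have "z \<le> 0" using u by simp
      moreover have "0 \<le> ?u * real lo" using u by simp
      ultimately show ?thesis by linarith
    qed
  qed
  have flx: "fl E m (?u * real X) = ereal (THE y. rne_of E m (?u * real X) y)"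
    by (rule fl_else[OF E]) (use u uu_le[OF E K, of X m] Xlh hiK' in auto)
  have ax: "?u * real lo < ?u * real X" and xb: "?u * real X < ?u * real hi" using u Xlh by auto
  have th: "(THE y. rne_of E m (?u * real X) y) = (if ?u * real X - ?u * real lo < ?u * real hi - ?u * real X
      \<or> (?u * real X - ?u * real lo = ?u * real hi - ?u * real X \<and> fp_even E m (?u * real lo))
      then ?u * real lo else ?u * real hi)"
    by (rule rne_two[OF loF hiF ax xb gap]) (use ev_lo ev_hi in simp)
  have r1: "real (2 * (X - lo)) = 2 * (real X - real lo)" using Xlh by (simp add: of_nat_diff)
  have r2: "real hi = real lo + real s" using hs by simp
  define dd where "dd = real (2 * (X - lo))"
  have r1': "dd = 2 * real X - 2 * real lo" using r1 unfolding dd_def by simp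
  have c1: "(?u * real X - ?u * real lo < ?u * real hi - ?u * real X) \<longleftrightarrow> 2*(X - lo) < s"
  proof -
    have "(?u * real X - ?u * real lo < ?u * real hi - ?u * real X) \<longleftrightarrow>
          ?u * (real X - real lo) < ?u * (real hi - real X)" by (simp add: algebra_simps)
    also have "\<dots> \<longleftrightarrow> real X - real lo < real hi - real X" using u by simp
    also have "\<dots> \<longleftrightarrow> dd < real s" using r1' r2 by (intro iffI) linarith+
    finally show ?thesis unfolding dd_def by (simp only: of_nat_less_iff)
  qed
  have c2: "(?u * real X - ?u * real lo = ?u * real hi - ?u * real X) \<longleftrightarrow> 2*(X - lo) = s"
  proof -
    have "(?u * real X - ?u * real lo = ?u * real hi - ?u * real X) \<longleftrightarrow>
          ?u * (real X - real lo) = ?u * (real hi - real X)" by (simp add: algebra_simps)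
    also have "\<dots> \<longleftrightarrow> real X - real lo = real hi - real X" using u by simp
    also have "\<dots> \<longleftrightarrow> dd = real s" using r1' r2 by (intro iffI) linarith+
    finally show ?thesis unfolding dd_def by (simp only: of_nat_eq_iff)
  qed
  show ?thesis unfolding flx th c1 c2 ev_lo
    unfolding lo_def hi_def s_def by (simp split: if_split)
qed

definition rndp :: "nat \<Rightarrow> nat \<Rightarrow> nat" where
  "rndp m i = (if i \<in> PP m then i else
     (let n = (THE n. 2^n \<le> i \<and> i < (2::nat)^(n+1)); s = (2::nat)^(n-m); q = i div s in
      if 2*(i - q*s) < s \<or> (2*(i - q*s) = s \<and> even q) then q*s else (q+1)*s))"

lemma log_unique:
  assumes "2^n \<le> i" "i < (2::nat)^(n+1)"
  shows "(THE n. 2^n \<le> i \<and> i < (2::nat)^(n+1)) = n"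
proof (rule the_equality)
  show "2^n \<le> i \<and> i < (2::nat)^(n+1)" using assms by simp
next
  fix n' assume n': "2^n' \<le> i \<and> i < (2::nat)^(n'+1)"
  show "n' = n"
  proof (rule ccontr)
    assume "n' \<noteq> n"
    then consider "n' + 1 \<le> n" | "n + 1 \<le> n'" by linarith
    then show False
    proof cases
      case 1
      then have "(2::nat)^(n'+1) \<le> 2^n" by (rule power_increasing) simp
      then show False using n' assms by linarith
    next
      case 2
      then have "(2::nat)^(n+1) \<le> 2^n'" by (rule power_increasing) simp
      then show False using n' assms by linarith
    qed
  qed
qed

lemma rndp_id: "i \<in> PP m \<Longrightarrow> rndp m i = i"
  unfolding rndp_def by simp

lemma rndp_case:
  assumes "i \<notin> PP m"
  obtains n q where "n \<ge> m+1" "2^n \<le> i" "i < 2^(n+1)" "2^m \<le> q" "q < 2^(m+1)"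
    "q*2^(n-m) < i" "i < (q+1)*2^(n-m)"
    "rndp m i = (if 2*(i - q*2^(n-m)) < 2^(n-m) \<or> (2*(i - q*2^(n-m)) = 2^(n-m) \<and> even q)
                 then q*2^(n-m) else (q+1)*2^(n-m))"
proof -
  have i1: "2^(m+1) \<le> i" using assms PP_small[of i m] by (meson not_less)
  then have "1 \<le> i" using order.trans[OF one_le_power[of "2::nat" "m+1"]] by simp
  then obtain n where n: "2^n \<le> i" "i < (2::nat)^(n+1)" using log_ex by blast
  have "(2::nat)^(m+1) < 2^(n+1)" using i1 n(2) by linarith
  then have "m + 1 < n + 1" by (rule power_less_imp_less_exp[rotated]) simp
  then have mn: "m + 1 \<le> n" by simp
  define s where "s = (2::nat)^(n-m)"
  define q where "q = i div s"
  have s0: "0 < s" unfolding s_def by simp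
  have ns: "(2::nat)^n = 2^m * s" unfolding s_def using mn pow_split[of m n] by simp
  have ns1: "(2::nat)^(n+1) = 2^(m+1) * s" unfolding s_def using mn pow_split[of "m+1" "n+1"] by simp
  have q1: "2^m \<le> q" unfolding q_def using less_eq_div_iff_mult_less_eq[OF s0] n(1) ns by (simp add: mult.commute)
  have q2: "q < 2^(m+1)" unfolding q_def using div_less_iff_less_mult[OF s0] n(2) ns1 by (simp add: mult.commute)
  have dm: "i = q * s + i mod s" unfolding q_def by simp
  have "i mod s < s" using s0 by simp
  then have "i < q * s + s" using dm by linarith
  then have q4: "i < (q+1) * s" by simp
  have "i mod s \<noteq> 0"
  proof
    assume "i mod s = 0"
    then have "i = q * s" using dm by linarith
    then have "i \<in> PP m" unfolding s_def using PP_intro[OF q2] by simp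
    then show False using assms by simp
  qed
  then have q3: "q * s < i" using dm by linarith
  have r: "rndp m i = (if 2*(i - q*s) < s \<or> (2*(i - q*s) = s \<and> even q) then q*s else (q+1)*s)"
    unfolding rndp_def using assms log_unique[OF n] unfolding q_def s_def Let_def by simp
  show ?thesis using that[OF mn n q1 q2 q3[unfolded s_def] q4[unfolded s_def] r[unfolded s_def]] .
qed

lemma rndp_props:
  assumes "i < 2^l"
  shows "rndp m i \<in> PP m \<and> rndp m i \<le> 2^l \<and> (rndp m i = 2^l \<longrightarrow> l \<ge> m+2)"
proof (cases "i \<in> PP m")
  case True then show ?thesis using assms rndp_id by simp
next
  case False
  then obtain n q where nq: "n \<ge> m+1" "2^n \<le> i" "i < 2^(n+1)" "2^m \<le> q" "q < 2^(m+1)"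
    "q*2^(n-m) < i" "i < (q+1)*2^(n-m)"
    "rndp m i = (if 2*(i - q*2^(n-m)) < 2^(n-m) \<or> (2*(i - q*2^(n-m)) = 2^(n-m) \<and> even q)
                 then q*2^(n-m) else (q+1)*2^(n-m))" by (rule rndp_case)
  have "(2::nat)^n < 2^l" using nq(2) assms by linarith
  then have nl: "n < l" by (rule power_less_imp_less_exp[rotated]) simp
  have lo: "q*2^(n-m) \<in> PP m" using PP_intro[OF nq(5)] .
  have hi: "(q+1)*2^(n-m) \<in> PP m"
  proof (cases "q+1 < 2^(m+1)")
    case True then show ?thesis by (rule PP_intro)
  next
    case False then have "q+1 = 2^(m+1)" using nq(5) by simp
    then have "(q+1)*2^(n-m) = 2^m * 2^(n-m+1)" by (simp add: power_add)
    moreover have "(2::nat)^m * 2^(n-m+1) \<in> PP m" by (rule PP_intro) simp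
    ultimately show ?thesis by simp
  qed
  have "q+1 \<le> 2^(m+1)" using nq(5) by simp
  then have "(q+1)*2^(n-m) \<le> 2^(m+1)*2^(n-m)" by (rule mult_right_mono) simp
  also have "\<dots> = 2^(n+1)" using nq(1) pow_split[of "m+1" "n+1"] by simp
  finally have hle: "(q+1)*2^(n-m) \<le> 2^(n+1)" .
  have "(2::nat)^(n+1) \<le> 2^l" using nl by (intro power_increasing) auto
  then have hl: "(q+1)*2^(n-m) \<le> 2^l" using hle by linarith
  have ll: "q*2^(n-m) < 2^l" using nq(6) assms by linarith
  have "rndp m i = 2^l \<longrightarrow> l \<ge> m+2"
  proof
    assume "rndp m i = 2^l"
    then have "rndp m i \<noteq> q*2^(n-m)" using ll by simp
    then have "rndp m i = (q+1)*2^(n-m)" using nq(8) by (simp split: if_splits)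
    then have "(2::nat)^l \<le> 2^(n+1)" using hle \<open>rndp m i = 2^l\<close> by simp
    then have "l \<le> n + 1" by (rule power_le_imp_le_exp[rotated]) simp
    then show "l \<ge> m+2" using nl nq(1) by simp
  qed
  then show ?thesis using nq(8) lo hi hl ll by auto
qed

lemma rndp_top:
  assumes "l \<ge> m+2"
  shows "rndp m (2^l - 1) = 2^l"
proof -
  have notP: "2^l - 1 \<notin> PP m"
  proof
    assume "2^l - 1 \<in> PP m"
    then obtain q t where qt: "(2::nat)^l - 1 = q * 2^t" "q < 2^(m+1)" unfolding PP_def by blast
    have odd: "odd ((2::nat)^l - 1)" using assms by simp
    have "t = 0"
    proof (rule ccontr)
      assume "t \<noteq> 0"
      then have "even (q * 2^t)" by simp
      then have "even ((2::nat)^l - 1)" unfolding qt(1) .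
      then show False using odd by blast
    qed
    then have "q = 2^l - 1" using qt by simp
    moreover have "(2::nat)^(m+2) \<le> 2^l" using assms by (intro power_increasing) auto
    ultimately have "2^(m+2) - 1 \<le> q" by simp
    moreover have "(2::nat)^(m+1) < 2^(m+2) - 1"
    proof -
      have "(2::nat)^(m+2) = 2 * 2^(m+1)" by simp
      moreover have "(1::nat) < 2^(m+1)" by (rule one_less_power) simp_all
      ultimately show ?thesis by linarith
    qed
    ultimately show False using qt(2) by simp
  qed
  obtain n q where nq: "n \<ge> m+1" "(2::nat)^n \<le> 2^l - 1" "2^l - 1 < (2::nat)^(n+1)" "2^m \<le> q" "q < 2^(m+1)"
    "q*2^(n-m) < 2^l - 1" "2^l - 1 < (q+1)*2^(n-m)"
    "rndp m (2^l - 1) = (if 2*((2^l - 1) - q*2^(n-m)) < 2^(n-m) \<or> (2*((2^l - 1) - q*2^(n-m)) = 2^(n-m) \<and> even q)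
                 then q*2^(n-m) else (q+1)*2^(n-m))" by (rule rndp_case[OF notP])
  have l1: "(1::nat) \<le> 2^l" by simp
  have "(2::nat)^n < 2^l" using nq(2) l1 by linarith
  then have "n < l" by (rule power_less_imp_less_exp[rotated]) simp
  moreover have "(2::nat)^(l-1) < 2^(n+1)"
  proof -
    obtain k where "l = Suc k" using assms by (cases l) auto
    then have "(2::nat)^l = 2 * 2^(l-1)" by simp
    moreover have "1 \<le> (2::nat)^(l-1)" by simp
    ultimately show ?thesis using nq(3) by linarith
  qed
  then have "l - 1 < n + 1" by (rule power_less_imp_less_exp[rotated]) simp
  ultimately have nl: "n = l - 1" by simp
  define s where "s = (2::nat)^(n-m)"
  have ls: "(2::nat)^l = 2^(m+1) * s" unfolding s_def using nl assms pow_split[of "m+1" l] by simp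
  have "1 \<le> n - m" using nl assms by simp
  then have "(2::nat)^1 \<le> 2^(n-m)" by (rule power_increasing) simp
  then have s2: "2 \<le> s" unfolding s_def by simp
  define L where "L = (2::nat)^l"
  have n6: "q * s < L - 1" using nq(6) unfolding s_def L_def .
  have n7: "L - 1 < (q+1) * s" using nq(7) unfolding s_def L_def .
  have ls': "L = 2^(m+1) * s" using ls unfolding L_def .
  have "q = 2^(m+1) - 1"
  proof -
    have "q * s < L" using n6 by linarith
    then have "q * s < 2^(m+1) * s" by (simp only: ls')
    then have "0 < s \<and> q < 2^(m+1)" by (simp only: mult_less_cancel2)
    then have "q < 2^(m+1)" by (rule conjunct2)
    moreover have "L \<le> (q+1) * s" using n7 by linarith
    then have "2^(m+1) * s \<le> (q+1) * s" by (simp only: ls')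
    then have "0 < s \<longrightarrow> 2^(m+1) \<le> q+1" by (simp only: mult_le_cancel2)
    then have "2^(m+1) \<le> q+1" using s2 by simp
    ultimately show ?thesis by linarith
  qed
  have qs: "q * s = 2^(m+1)*s - 1*s" unfolding \<open>q = 2^(m+1) - 1\<close> by (rule diff_mult_distrib)
  have qs': "q * s = L - s" using qs ls unfolding L_def by simp
  have sL: "s \<le> L" using ls unfolding L_def by simp
  have d: "L - 1 - q*s = s - 1" using qs' sL s2 by linarith
  have oq: "odd q" using \<open>q = 2^(m+1) - 1\<close> by simp
  have "\<not> (2*(L - 1 - q*s) < s \<or> (2*(L - 1 - q*s) = s \<and> even q))"
  proof -
    have "s \<le> 2*(s-1)" using s2 by linarith
    then show ?thesis unfolding d using oq by simp
  qed
  then have "\<not> (2*((2^l - 1) - q*s) < s \<or> (2*((2^l - 1) - q*s) = s \<and> even q))" unfolding L_def .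
  then have "rndp m (2^l - 1) = (q+1)*s" using nq(8) unfolding s_def by simp
  also have "\<dots> = 2^l" using \<open>q = 2^(m+1) - 1\<close> ls by simp
  finally show ?thesis .
qed

lemma PP_mult: "i \<in> PP m \<Longrightarrow> i * 2^c \<in> PP m"
proof -
  assume "i \<in> PP m"
  then obtain q t where "i = q * 2^t" "q < 2^(m+1)" unfolding PP_def by blast
  then have "i * 2^c = q * 2^(t+c)" by (simp add: power_add)
  then show ?thesis using PP_intro[OF \<open>q < 2^(m+1)\<close>] by simp
qed

lemma round_i:
  assumes E: "E \<ge> 2" and m: "m \<ge> 1" and i: "i < 2^l" and lc: "l + c \<le> 2^E - 3 + m"
  shows "fl E m (uu E m * real (i * 2^c)) = ereal (uu E m * real (rndp m i * 2^c))"
proof -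
  define K where "K = l + c - m"
  have K: "K \<le> 2^E - 3" using lc unfolding K_def by linarith
  have "l + c \<le> K + m" unfolding K_def by linarith
  then have lcK: "(2::nat)^(l+c) \<le> 2^(K+m)" by (rule power_increasing) simp
  have ic: "i * 2^c < 2^(l+c)" using i by (simp add: power_add)
  show ?thesis
  proof (cases "i \<in> PP m")
    case True
    have "fl E m (uu E m * real (i * 2^c)) = ereal (uu E m * real (i * 2^c))"
      by (rule fl_exact[OF E K PP_mult[OF True]]) (use ic lcK in linarith)
    then show ?thesis using rndp_id[OF True] by simp
  next
    case False
    then obtain n q where nq: "n \<ge> m+1" "2^n \<le> i" "i < 2^(n+1)" "2^m \<le> q" "q < 2^(m+1)"
      "q*2^(n-m) < i" "i < (q+1)*2^(n-m)"
      "rndp m i = (if 2*(i - q*2^(n-m)) < 2^(n-m) \<or> (2*(i - q*2^(n-m)) = 2^(n-m) \<and> even q)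
                   then q*2^(n-m) else (q+1)*2^(n-m))" by (rule rndp_case)
    have "(2::nat)^n < 2^l" using nq(2) i by linarith
    then have nl: "n < l" by (rule power_less_imp_less_exp[rotated]) simp
    have "q+1 \<le> 2^(m+1)" using nq(5) by simp
    then have "(q+1)*2^(n-m) \<le> 2^(m+1)*2^(n-m)" by (rule mult_right_mono) simp
    also have "\<dots> = 2^(n+1)" using nq(1) pow_split[of "m+1" "n+1"] by simp
    also have "\<dots> \<le> 2^l" using nl by (intro power_increasing) auto
    finally have hl: "(q+1)*2^(n-m) \<le> 2^l" .
    have sc: "(2::nat)^(n+c-m) = 2^(n-m) * 2^c" using nq(1) by (simp add: power_add[symmetric])
    define s where "s = (2::nat)^(n-m)"
    define r where "r = i - q*s"
    have X1: "q * 2^(n+c-m) < i * 2^c" using nq(6) unfolding sc by simp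
    have X2: "i * 2^c < (q+1) * 2^(n+c-m)"
    proof -
      have "i * 2^c < ((q+1) * 2^(n-m)) * 2^c" using nq(7) by (rule mult_strict_right_mono) simp
      then show ?thesis unfolding sc by (simp only: mult.assoc)
    qed
    have hK: "(q+1) * 2^(n+c-m) \<le> 2^(K+m)"
    proof -
      have "(q+1) * 2^(n+c-m) = ((q+1)*2^(n-m)) * 2^c" unfolding sc by (simp only: mult.assoc)
      also have "\<dots> \<le> 2^l * 2^c" using hl by simp
      also have "\<dots> = 2^(l+c)" by (simp add: power_add)
      finally show ?thesis using lcK by linarith
    qed
    have n': "n + c \<ge> m + 1" using nq(1) by simp
    have "n + c - m = (n + c) - m" by simp
    have fr: "fl E m (uu E m * real (i * 2^c)) = ereal (uu E m * real (if 2*(i * 2^c - q*2^(n+c-m)) < 2^(n+c-m)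
       \<or> (2*(i * 2^c - q*2^(n+c-m)) = 2^(n+c-m) \<and> even q) then q*2^(n+c-m) else (q+1)*2^(n+c-m)))"
      by (rule fl_round[OF E m K n' nq(4,5) X1 X2 hK])
    have d: "i * 2^c - q*2^(n+c-m) = r * 2^c" unfolding sc r_def s_def by (simp add: diff_mult_distrib)
    have c1: "(2*(r * 2^c) < s * 2^c) = (2*r < s)" by simp
    have c2: "(2*(r * 2^c) = s * 2^c) = (2*r = s)" by simp
    have "(if 2*(i * 2^c - q*2^(n+c-m)) < 2^(n+c-m)
       \<or> (2*(i * 2^c - q*2^(n+c-m)) = 2^(n+c-m) \<and> even q) then q*2^(n+c-m) else (q+1)*2^(n+c-m))
       = (if 2*r < s \<or> (2*r = s \<and> even q) then q*s else (q+1)*s) * 2^c"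
      unfolding d unfolding sc s_def[symmetric] c1 c2 by (simp add: algebra_simps)
    also have "\<dots> = rndp m i * 2^c" using nq(8) unfolding r_def s_def by simp
    finally show ?thesis using fr by simp
  qed
qed

lemma CC_P: "b \<ge> 1 \<Longrightarrow> CC m (m + b - 1) = 2^m * b"
proof -
  assume b: "b \<ge> 1"
  consider "b = 1" | "b = 2" | "b \<ge> 3" using b by linarith
  then show ?thesis
  proof cases
    case 1 then show ?thesis by (simp add: CC_def)
  next
    case 2 then show ?thesis by (simp add: CC_def)
  next
    case 3
    then have "\<not> m + b - 1 \<le> m + 1" by simp
    then have "CC m (m + b - 1) = 2^(m+1) + (b - 2) * 2^m" unfolding CC_def by simp
    also have "\<dots> = 2 * 2^m + (b-2) * 2^m" by simp
    also have "\<dots> = (2 + (b - 2)) * 2^m" by (simp only: add_mult_distrib)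
    also have "2 + (b - 2) = b" using 3 by simp
    finally show ?thesis by simp
  qed
qed

lemma CC_l: "l \<ge> m + 2 \<Longrightarrow> real (CC m l + 1) = 2^m * (real l - real m + 1) + 1"
proof -
  assume l: "l \<ge> m + 2"
  then have "CC m l = 2^(m+1) + (l - m - 1) * 2^m" unfolding CC_def by simp
  then have "real (CC m l + 1) = 2 * 2^m + real (l - m - 1) * 2^m + 1" by simp
  also have "real (l - m - 1) = real l - real m - 1" using l by (simp add: of_nat_diff)
  finally show ?thesis by (simp add: algebra_simps)
qed

lemma CC_small: "l \<le> m + 1 \<Longrightarrow> CC m l = 2^l" unfolding CC_def by simp

theorem propositionB1:
  fixes E m l :: nat
  assumes "E \<ge> 1" and "m \<ge> 1"
    and "int l \<le> 2 ^ (E - 1) - 2"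
  shows "let r = (if l \<le> m + 1
                  then 2 ^ l / (2 ^ m * (2 ^ (E - 1) - 1) + 1)
                  else (2 ^ m * (real l - real m + 1) + 1) / (2 ^ m * (2 ^ (E - 1) - 1) + 1) :: real)
         in real (card ((\<lambda>i. fl E m (real i / 2 ^ l)) ` {0..<2 ^ l}))
              / real (card (fp_set E m \<inter> {0..1})) = r
          \<and> real (card ((\<lambda>i. fl_ext E m (fl E m (real i) / fl E m (2 ^ l))) ` {0..<2 ^ l}))
              / real (card (fp_set E m \<inter> {0..1})) = r"
proof -
  have E2: "E \<ge> 2"
  proof (rule ccontr)
    assume "\<not> E \<ge> 2"
    then have "E = 1" using assms(1) by simp
    then show False using assms(3) by simp
  qed
  have m: "m \<ge> 1" by (rule assms(2))
  have bbE: "int (bb E) = 2^(E-1) - 1" using bias_bb[of E] assms(1) unfolding fp_bias_def by simp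
  have lb: "l + 1 \<le> bb E" using assms(3) bbE by linarith
  have b1: "bb E \<ge> 1" by (rule bb_ge[OF E2])
  have bb2: "2^E - 2 = 2 * bb E" by (rule two_pow_E) (use E2 in simp)
  define P where "P = m + bb E - 1"
  have uP: "uu E m * 2^P = 1" unfolding P_def by (rule uu_eq[OF E2])
  define c1 where "c1 = P - l"
  have lc1: "l + c1 = P" unfolding c1_def P_def using lb by simp
  have uc1: "uu E m * 2^c1 = 1 / 2^l"
  proof -
    have "uu E m * 2^c1 * 2^l = uu E m * 2^(l + c1)" by (simp add: power_add)
    also have "\<dots> = 1" unfolding lc1 by (rule uP)
    finally show ?thesis by (simp add: field_simps)
  qed
  have u0: "uu E m > 0" by (rule uu_pos)
  have cv1: "real j / 2^l = uu E m * real (j * 2^c1)" for j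
    using uc1 by (simp add: field_simps)
  have cvP: "real j = uu E m * real (j * 2^P)" for j
    using uP by (simp add: field_simps)
  have lc1b: "l + c1 \<le> 2^E - 3 + m" using lc1 bb2 b1 unfolding P_def by linarith
  have lPb: "l + P \<le> 2^E - 3 + m" using lb bb2 b1 unfolding P_def by linarith
  have A: "fl E m (real i / 2^l) = ereal (real (rndp m i) / 2^l)" if "i < 2^l" for i
    unfolding cv1 using round_i[OF E2 m that lc1b] by simp
  have exact1: "fl E m (real p / 2^l) = ereal (real p / 2^l)" if "p \<in> PP m" "p \<le> 2^l" for p
  proof -
    have K: "bb E - 1 \<le> 2^E - 3" using bb2 b1 by linarith
    have "p * 2^c1 \<le> 2^l * 2^c1" using that(2) by simp
    also have "\<dots> = 2^(bb E - 1 + m)" using lc1 b1 unfolding P_def by (simp add: power_add[symmetric] add.commute)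
    finally have "p * 2^c1 \<le> 2^(bb E - 1 + m)" .
    from fl_exact[OF E2 K PP_mult[OF that(1)] this] show ?thesis unfolding cv1 by simp
  qed
  have f2l: "fl E m (2^l) = ereal (2^l)"
  proof -
    have K: "l + bb E - 1 \<le> 2^E - 3" using bb2 b1 lb by linarith
    have o1: "(1::nat) < 2^(m+1)" by (rule one_less_power) simp_all
    have PPl: "(2::nat)^l \<in> PP m" using PP_intro[OF o1, of l] by simp
    have e: "l + bb E - 1 + m = l + P" unfolding P_def using b1 by simp
    have "2^l * 2^P = (2::nat)^(l + P)" by (rule power_add[symmetric])
    then have "2^l * 2^P \<le> (2::nat)^(l + bb E - 1 + m)" unfolding e by simp
    from fl_exact[OF E2 K PP_mult[OF PPl] this] have "fl E m (uu E m * real (2^l * 2^P)) = ereal (uu E m * real (2^l * 2^P))" .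
    moreover have eq: "uu E m * real (2^l * 2^P) = (2::real)^l" using cvP[of "2^l"] by (simp only: of_nat_power of_nat_numeral)
    ultimately show ?thesis by (simp only: eq)
  qed
  have B: "fl_ext E m (fl E m (real i) / fl E m (2^l)) = ereal (real (rndp m i) / 2^l)" if "i < 2^l" for i
  proof -
    have e1: "uu E m * real (i * 2^P) = real i" using cvP[of i] by (rule sym)
    have e2: "uu E m * real (rndp m i * 2^P) = real (rndp m i)" using cvP[of "rndp m i"] by (rule sym)
    have "fl E m (real i) = ereal (real (rndp m i))"
      using round_i[OF E2 m that lPb] unfolding e1 e2 .
    then have "fl E m (real i) / fl E m (2^l) = ereal (real (rndp m i) / 2^l)"
      unfolding f2l by simp
    then have "fl_ext E m (fl E m (real i) / fl E m (2^l)) = fl E m (real (rndp m i) / 2^l)"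
      unfolding fl_ext_def by simp
    also have "\<dots> = ereal (real (rndp m i) / 2^l)"
      using rndp_props[OF that, of m] by (intro exact1) auto
    finally show ?thesis .
  qed
  define g where "g p = ereal (real p / 2^l)" for p :: nat
  have injg: "inj_on g S" for S by (rule inj_onI) (simp add: g_def)
  have img1: "(\<lambda>i. fl E m (real i / 2 ^ l)) ` {0..<2 ^ l} = g ` (rndp m ` {0..<2^l})"
    unfolding image_image by (rule image_cong) (auto simp: A g_def)
  have img2: "(\<lambda>i. fl_ext E m (fl E m (real i) / fl E m (2 ^ l))) ` {0..<2 ^ l} = g ` (rndp m ` {0..<2^l})"
    unfolding image_image by (rule image_cong) (auto simp: B g_def)
  define T where "T = (if l \<ge> m+2 then {2^l} else ({} :: nat set))"
  have R: "rndp m ` {0..<2^l} = (PP m \<inter> {..<2^l}) \<union> T"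
  proof
    show "rndp m ` {0..<2^l} \<subseteq> (PP m \<inter> {..<2^l}) \<union> T"
    proof
      fix x assume "x \<in> rndp m ` {0..<2^l}"
      then obtain i where i: "i < 2^l" "x = rndp m i" by auto
      from rndp_props[OF i(1), of m] i(2) show "x \<in> (PP m \<inter> {..<2^l}) \<union> T"
        unfolding T_def by (cases "x = 2^l") auto
    qed
  next
    show "(PP m \<inter> {..<2^l}) \<union> T \<subseteq> rndp m ` {0..<2^l}"
    proof
      fix x assume x: "x \<in> (PP m \<inter> {..<2^l}) \<union> T"
      show "x \<in> rndp m ` {0..<2^l}"
      proof (cases "x \<in> T")
        case True
        then have l2: "l \<ge> m+2" and xl: "x = 2^l" unfolding T_def by (auto split: if_splits)
        have "x = rndp m (2^l - 1)" using rndp_top[OF l2] xl by simp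
        moreover have "(2::nat)^l - 1 \<in> {0..<2^l}" by simp
        ultimately show ?thesis by blast
      next
        case False
        then have "x \<in> PP m" "x < 2^l" using x by auto
        then show ?thesis using rndp_id[of x m] by force
      qed
    qed
  qed
  have cardR: "card (rndp m ` {0..<2^l}) = CC m l + (if l \<ge> m+2 then 1 else 0)"
  proof -
    have "card ((PP m \<inter> {..<2^l}) \<union> T) = card (PP m \<inter> {..<2^l}) + card T"
      by (rule card_Un_disjoint) (auto simp: T_def)
    then show ?thesis unfolding R card_PP T_def by simp
  qed
  have num1: "card ((\<lambda>i. fl E m (real i / 2 ^ l)) ` {0..<2 ^ l}) = CC m l + (if l \<ge> m+2 then 1 else 0)"
    unfolding img1 card_image[OF injg] cardR ..
  have num2: "card ((\<lambda>i. fl_ext E m (fl E m (real i) / fl E m (2 ^ l))) ` {0..<2 ^ l}) = CC m l + (if l \<ge> m+2 then 1 else 0)"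
    unfolding img2 card_image[OF injg] cardR ..
  have D: "fp_set E m \<inter> {0..1} = (\<lambda>N. uu E m * real N) ` (PP m \<inter> {..2^P})"
  proof
    show "fp_set E m \<inter> {0..1} \<subseteq> (\<lambda>N. uu E m * real N) ` (PP m \<inter> {..2^P})"
    proof
      fix z assume z: "z \<in> fp_set E m \<inter> {0..1}"
      then have "z \<in> fp_set E m" by simp
      then obtain N where N: "N \<in> QQ E m" "z = uu E m * real N \<or> z = - (uu E m * real N)"
        unfolding fp_set_iff by blast
      have NP: "N \<in> PP m" using N(1) QQ_PP by blast
      show "z \<in> (\<lambda>N. uu E m * real N) ` (PP m \<inter> {..2^P})"
      proof (cases "z = uu E m * real N")
        case True
        then have "uu E m * real N \<le> uu E m * 2^P" using z uP by simp
        then have "real N \<le> 2^P" using u0 by simp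
        then have "real N \<le> real ((2::nat)^P)" by simp
        then have "N \<le> 2^P" by (simp only: of_nat_le_iff)
        then show ?thesis using True NP by blast
      next
        case False
        then have "z = - (uu E m * real N)" using N(2) by blast
        moreover have "0 \<le> uu E m * real N" using u0 by simp
        moreover have "0 \<le> z" using z by simp
        ultimately have "z = 0" by linarith
        moreover have "(0::nat) \<in> PP m \<inter> {..2^P}" using PP_small[of 0 m] by simp
        ultimately show ?thesis by force
      qed
    qed
  next
    show "(\<lambda>N. uu E m * real N) ` (PP m \<inter> {..2^P}) \<subseteq> fp_set E m \<inter> {0..1}"
    proof
      fix z assume "z \<in> (\<lambda>N. uu E m * real N) ` (PP m \<inter> {..2^P})"
      then obtain N where N: "N \<in> PP m" "N \<le> 2^P" "z = uu E m * real N" by auto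
      have K: "bb E - 1 \<le> 2^E - 3" using bb2 b1 by linarith
      have "N \<le> 2^(bb E - 1 + m)" using N(2) b1 unfolding P_def by (simp add: add.commute)
      then have "z \<in> fp_set E m" using inF[OF E2 K N(1)] N(3) by simp
      moreover have "real N \<le> real ((2::nat)^P)" using N(2) by (simp only: of_nat_le_iff)
      then have "real N \<le> 2^P" by simp
      then have "uu E m * real N \<le> uu E m * 2^P" using u0 by (intro mult_left_mono) auto
      then have "z \<le> 1" using N(3) uP by simp
      moreover have "0 \<le> z" using N(3) u0 by simp
      ultimately show "z \<in> fp_set E m \<inter> {0..1}" by simp
    qed
  qed
  have injU: "inj_on (\<lambda>N. uu E m * real N) S" for S by (rule inj_onI) (use u0 in simp)
  have o1: "(1::nat) < 2^(m+1)" by (rule one_less_power) simp_all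
  have PPins: "PP m \<inter> {..2^P} = insert (2^P) (PP m \<inter> {..<2^P})"
    using PP_intro[OF o1, of P] by auto
  have den: "card (fp_set E m \<inter> {0..1}) = 2^m * bb E + 1"
  proof -
    have "card (fp_set E m \<inter> {0..1}) = card (PP m \<inter> {..2^P})" unfolding D by (rule card_image[OF injU])
    also have "\<dots> = CC m P + 1" unfolding PPins by (simp add: card_PP)
    also have "CC m P = 2^m * bb E" unfolding P_def by (rule CC_P[OF b1])
    finally show ?thesis .
  qed
  have denr: "real (card (fp_set E m \<inter> {0..1})) = 2 ^ m * (2 ^ (E - 1) - 1) + 1"
  proof -
    have "real_of_int (int (bb E)) = real_of_int (2^(E-1) - 1)" using bbE by (rule arg_cong)
    then have "real (bb E) = 2^(E-1) - 1" by simp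
    then show ?thesis unfolding den by simp
  qed
  have numr: "real (CC m l + (if l \<ge> m+2 then 1 else 0)) = (if l \<le> m + 1 then 2 ^ l else 2 ^ m * (real l - real m + 1) + 1)"
  proof (cases "l \<le> m + 1")
    case True then show ?thesis using CC_small[OF True] by simp
  next
    case False then show ?thesis using CC_l[of m l] by simp
  qed
  show ?thesis unfolding Let_def num1 num2 denr numr by (simp add: if_distrib)
qed

end
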